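(* Fix $-1<\xi_1<\xi_2<\xi_3<1$. As $(s,t)\to(0,0)$ with $s,t>0$, $$P(s,t)-P(0,0)=\frac{1}{2\sqrt{1-\xi_2}\sqrt{1+\xi_2}\sqrt{\xi_3-\xi_2}}\,t\ln\frac1t+o\!\left(t\ln\frac1t\right)+O(s).$$
   Context: Fix $-1<\xi_1<\xi_2<\xi_3<1$. For real $y$, $\sqrt y$ denotes the principal branch: $\sqrt y\ge0$ for $y\ge0$ and $\sqrt y=i\sqrt{|y|}$ for $y<0$. For small $s,t\ge 0$ let $$g_{s,t}(x)=\frac{\sqrt{x-\xi_1+s}\,\sqrt{x-\xi_2+t}}{\sqrt{x-1}\sqrt{x+1}\sqrt{x-\xi_1}\sqrt{x-\xi_2}\sqrt{x-\xi_3}},$$ and define $A(s,t)=-i\int_{-\infty}^{-1}g_{s,t}\,dx$, $B(s,t)=-i\int_{\xi_1-s}^{\xi_1}g_{s,t}\,dx$, $C(s,t)=-i\int_{\xi_2-t}^{\xi_2}g_{s,t}\,dx$, $P(s,t)=-\int_{\xi_2}^{\xi_3}g_{s,t}\,dx$, $Q(s,t)=-\int_{\xi_1}^{\xi_2-t}g_{s,t}\,dx$, and $1/J(s,t)=\int_1^{\infty}g_{s,t}\,dx$ (all these are real). Notation: $h=O(g)$ means $|h/g|$ is bounded near $(0,0)$, and $h=o(g)$ means $h/g\to0$ as $(s,t)\to(0,0)$. *)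

theory Defs
  imports "HOL-Analysis.Analysis" "HOL-Library.Landau_Symbols"
begin

text \<open>Principal square root of a real number, as a complex number:
  psqrt y = sqrt y for y \<ge> 0 and i * sqrt |y| for y < 0 (this is exactly csqrt on reals).\<close>
definition psqrt :: "real \<Rightarrow> complex" where
  "psqrt y = csqrt (complex_of_real y)"

definition gst :: "real \<Rightarrow> real \<Rightarrow> real \<Rightarrow> real \<Rightarrow> real \<Rightarrow> real \<Rightarrow> complex" where
  "gst \<xi>1 \<xi>2 \<xi>3 s t x =
     (psqrt (x - \<xi>1 + s) * psqrt (x - \<xi>2 + t)) /
     (psqrt (x - 1) * psqrt (x + 1) * psqrt (x - \<xi>1) * psqrt (x - \<xi>2) * psqrt (x - \<xi>3))"

definition Pst :: "real \<Rightarrow> real \<Rightarrow> real \<Rightarrow> real \<Rightarrow> real \<Rightarrow> complex" where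
  "Pst \<xi>1 \<xi>2 \<xi>3 s t = - integral {\<xi>2..\<xi>3} (gst \<xi>1 \<xi>2 \<xi>3 s t)"

end

theory Submission
  imports Defs
begin

lemma dom_int:
  fixes f G :: "real \<Rightarrow> real"
  assumes "continuous_on {b<..<c} f" "(G has_integral IG) {b<..<c}"
    "\<And>x. x\<in>{b<..<c} \<Longrightarrow> \<bar>f x\<bar> \<le> M * G x"
  shows "f integrable_on {b<..<c}" "\<bar>integral {b<..<c} f\<bar> \<le> M * IG"
proof -
  have g: "((\<lambda>x. M * G x) has_integral M * IG) {b<..<c}"
    using has_integral_mult_right[OF assms(2)] by simp
  show fi: "f integrable_on {b<..<c}"
    apply (rule measurable_bounded_by_integrable_imp_integrable_real[where g="\<lambda>x. M * G x"])
    using continuous_imp_measurable_on_sets_lebesgue[OF assms(1)] g assms(3) by auto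
  have "norm (integral {b<..<c} f) \<le> integral {b<..<c} (\<lambda>x. M * G x)"
    apply (rule integral_norm_bound_integral[OF fi])
    using g assms(3) by auto
  then show "\<bar>integral {b<..<c} f\<bar> \<le> M * IG" using assms(2) by (simp add: integral_unique)
qed

lemma int_left:
  fixes b c :: real assumes "b < c"
  shows "((\<lambda>x. 1 / sqrt (x - b)) has_integral 2 * sqrt (c - b)) {b<..<c}"
proof -
  have "((\<lambda>x. 1 / sqrt (x - b)) has_integral (2 * sqrt (c - b) - 2 * sqrt (b - b))) {b..c}"
  proof (rule fundamental_theorem_of_calculus_interior)
    show "b \<le> c" using assms by simp
    show "continuous_on {b..c} (\<lambda>x. 2 * sqrt (x - b))" by (intro continuous_intros)
    show "((\<lambda>x. 2 * sqrt (x - b)) has_vector_derivative 1 / sqrt (x - b)) (at x)" if "x \<in> {b<..<c}" for x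
      using that unfolding has_real_derivative_iff_has_vector_derivative[symmetric]
      by (auto intro!: derivative_eq_intros simp: field_simps)
  qed
  then show ?thesis by (simp add: has_integral_Icc_iff_Ioo)
qed

lemma int_right:
  fixes b c :: real assumes "b < c"
  shows "((\<lambda>x. 1 / sqrt (c - x)) has_integral 2 * sqrt (c - b)) {b<..<c}"
proof -
  have "((\<lambda>x. 1 / sqrt (c - x)) has_integral (- 2 * sqrt (c - c) - (- 2 * sqrt (c - b)))) {b..c}"
  proof (rule fundamental_theorem_of_calculus_interior)
    show "b \<le> c" using assms by simp
    show "continuous_on {b..c} (\<lambda>x. - 2 * sqrt (c - x))" by (intro continuous_intros)
    show "((\<lambda>x. - 2 * sqrt (c - x)) has_vector_derivative 1 / sqrt (c - x)) (at x)" if "x \<in> {b<..<c}" for x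
      using that unfolding has_real_derivative_iff_has_vector_derivative[symmetric]
      by (auto intro!: derivative_eq_intros simp: field_simps)
  qed
  then show ?thesis by (simp add: has_integral_Icc_iff_Ioo)
qed

lemma int_G:
  fixes b c :: real assumes "b < c"
  shows "((\<lambda>x. 1 / sqrt (x - b) + 1 / sqrt (c - x)) has_integral 4 * sqrt (c - b)) {b<..<c}"
  using has_integral_add[OF int_left[OF assms] int_right[OF assms]] by simp

definition kf :: "real \<Rightarrow> real \<Rightarrow> real" where
  "kf c x = 1 / (sqrt (1 - x) * sqrt (1 + x) * sqrt (c - x))"
definition phi :: "real \<Rightarrow> real \<Rightarrow> real \<Rightarrow> real" where
  "phi b t x = sqrt (x - b + t) / sqrt (x - b) - 1"
definition T1f :: "real \<Rightarrow> real \<Rightarrow> real \<Rightarrow> real \<Rightarrow> real \<Rightarrow> real \<Rightarrow> real" where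
  "T1f a b c s t x = (sqrt (x - a + s) - sqrt (x - a)) * sqrt (x - b + t) /
     (sqrt (x - b) * sqrt (1 - x) * sqrt (1 + x) * sqrt (x - a) * sqrt (c - x))"
definition Ff :: "real \<Rightarrow> real \<Rightarrow> real \<Rightarrow> real \<Rightarrow> real \<Rightarrow> real \<Rightarrow> real" where
  "Ff a b c s t x = sqrt (x - a + s) * sqrt (x - b + t) /
     (sqrt (1 - x) * sqrt (1 + x) * sqrt (x - a) * sqrt (x - b) * sqrt (c - x))"

lemma gen_le: fixes u s :: real assumes "0 < u" "0 \<le> s"
  shows "sqrt (u + s) / sqrt u - 1 \<le> s / u" "0 \<le> sqrt (u + s) / sqrt u - 1"
proof -
  define A where "A = sqrt u"
  define B where "B = sqrt (u + s)"
  have A: "A > 0" "A^2 = u" using assms by (auto simp: A_def)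
  have B: "B \<ge> A" "B^2 = u + s" using assms by (auto simp: A_def B_def)
  have "sqrt (u + s) / sqrt u - 1 = (B - A) / A" using A by (simp add: A_def B_def field_simps)
  also have "\<dots> \<le> s / u"
  proof -
    have "(B - A) * A \<le> s"
    proof -
      have "(B - A) * (B + A) = s" using A B by (simp add: algebra_simps power2_eq_square)
      moreover have "(B - A) * A \<le> (B - A) * (B + A)"
        using A B by (intro mult_left_mono) auto
      ultimately show ?thesis by simp
    qed
    then have "(B - A) * A / A^2 \<le> s / A^2" by (intro divide_right_mono) auto
    moreover have "(B - A) * A / A^2 = (B - A) / A" using A(1) by (simp add: power2_eq_square)
    ultimately show ?thesis using A by simp
  qed
  finally show "sqrt (u + s) / sqrt u - 1 \<le> s / u" .
  show "0 \<le> sqrt (u + s) / sqrt u - 1" using assms by simp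
qed

lemma gen2: fixes p q :: real assumes "0 < p" "0 < q"
  shows "\<bar>1 / sqrt p - 1 / sqrt q\<bar> \<le> \<bar>q - p\<bar> / (sqrt p * q)"
proof -
  have sp: "sqrt p > 0" "sqrt q > 0" using assms by auto
  have e1: "1 / sqrt p - 1 / sqrt q = (sqrt q - sqrt p) / (sqrt p * sqrt q)" using sp by (simp add: field_simps)
  have e2: "(sqrt q - sqrt p) * (sqrt q + sqrt p) = q - p" using assms by (simp add: algebra_simps)
  have "\<bar>sqrt q - sqrt p\<bar> * sqrt q \<le> \<bar>sqrt q - sqrt p\<bar> * (sqrt q + sqrt p)"
    using sp by (intro mult_left_mono) auto
  also have "\<dots> = \<bar>q - p\<bar>" using e2 sp by (metis abs_mult abs_of_pos add_pos_pos)
  finally have "\<bar>sqrt q - sqrt p\<bar> \<le> \<bar>q - p\<bar> / sqrt q" using sp by (simp add: field_simps)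
  then have "\<bar>sqrt q - sqrt p\<bar> / (sqrt p * sqrt q) \<le> \<bar>q - p\<bar> / sqrt q / (sqrt p * sqrt q)"
    using sp by (intro divide_right_mono) auto
  also have "\<dots> = \<bar>q - p\<bar> / (sqrt p * q)" using sp assms
    by (simp add: field_simps)
  finally show ?thesis using e1 sp by (simp add: abs_div)
qed

context fixes a b c :: real assumes abc: "-1 < a" "a < b" "b < c" "c < 1"
begin

definition "K0 = 1 / (sqrt (1 - c) * sqrt (1 + b))"
definition "G x = 1 / sqrt (x - b) + 1 / sqrt (c - x)"

lemma K0_pos: "K0 > 0" using abc by (simp add: K0_def)

lemma G_ge: "x \<in> {b<..<c} \<Longrightarrow> 1 / sqrt (x - b) \<le> G x" "x \<in> {b<..<c} \<Longrightarrow> 1 / sqrt (c - x) \<le> G x"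
  by (auto simp: G_def)

lemma inv_prod_le: "x \<in> {b<..<c} \<Longrightarrow> 1 / (sqrt (1 - x) * sqrt (1 + x)) \<le> K0"
proof -
  assume x: "x \<in> {b<..<c}"
  have "sqrt (1 - c) * sqrt (1 + b) \<le> sqrt (1 - x) * sqrt (1 + x)"
    using x abc by (intro mult_mono) auto
  moreover have "sqrt (1 - c) * sqrt (1 + b) > 0" using abc by simp
  ultimately show ?thesis unfolding K0_def by (intro frac_le) auto
qed

lemma B1: "x \<in> {b<..<c} \<Longrightarrow> \<bar>kf c x\<bar> \<le> K0 * G x"
proof -
  assume x: "x \<in> {b<..<c}"
  have e: "kf c x = 1 / (sqrt (1 - x) * sqrt (1 + x)) * (1 / sqrt (c - x))" by (simp add: kf_def)
  have p: "0 \<le> 1 / (sqrt (1 - x) * sqrt (1 + x)) * (1 / sqrt (c - x))"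
    using x abc by auto
  have "1 / (sqrt (1 - x) * sqrt (1 + x)) * (1 / sqrt (c - x)) \<le> K0 * G x"
    using x abc inv_prod_le[OF x] G_ge[OF x] K0_pos by (intro mult_mono) auto
  then show ?thesis using e p by simp
qed

lemma sqrt_diff_le: "0 \<le> u \<Longrightarrow> 0 \<le> t \<Longrightarrow> sqrt (u + t) \<le> sqrt u + sqrt t"
  by (rule real_le_lsqrt) (auto simp: power2_sum)

lemma phi_nonneg: "x \<in> {b<..<c} \<Longrightarrow> 0 \<le> t \<Longrightarrow> 0 \<le> phi b t x"
  by (auto simp: phi_def)

lemma B2: "x \<in> {b<..<c} \<Longrightarrow> 0 \<le> t \<Longrightarrow> \<bar>phi b t x\<bar> \<le> sqrt t * G x"
proof -
  assume x: "x \<in> {b<..<c}" and t: "0 \<le> t"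
  have "sqrt (x - b + t) \<le> sqrt (x - b) + sqrt t" using x t sqrt_diff_le[of "x - b" t] by auto
  then have "sqrt (x - b + t) / sqrt (x - b) \<le> (sqrt (x - b) + sqrt t) / sqrt (x - b)"
    using x by (intro divide_right_mono) auto
  also have "\<dots> = 1 + sqrt t / sqrt (x - b)" using x by (simp add: field_simps)
  finally have "phi b t x \<le> sqrt t / sqrt (x - b)" unfolding phi_def by simp
  also have "\<dots> \<le> sqrt t * G x" using G_ge[OF x] t
    by (metis mult_left_mono real_sqrt_ge_zero times_divide_eq_right mult.right_neutral)
  finally show ?thesis using phi_nonneg[OF x t] by simp
qed

lemma phi_le: "x \<in> {b<..<c} \<Longrightarrow> 0 \<le> t \<Longrightarrow> phi b t x \<le> t / (x - b)"
  using gen_le[of "x - b" t] by (auto simp: phi_def)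

lemma prod_inv_le: "x \<in> {b<..<c} \<Longrightarrow> 1 / (sqrt (x - b) * sqrt (c - x)) \<le> sqrt 2 / sqrt (c - b) * G x"
proof -
  assume x: "x \<in> {b<..<c}"
  have key: "1 / sqrt u \<le> sqrt 2 / sqrt (c - b)" if "u \<ge> (c - b) / 2" for u
  proof -
    have "1 / sqrt u \<le> 1 / sqrt ((c - b) / 2)" using that abc by (intro divide_left_mono) auto
    also have "\<dots> = sqrt 2 / sqrt (c - b)" by (simp add: real_sqrt_divide)
    finally show ?thesis .
  qed
  have e: "1 / (sqrt (x - b) * sqrt (c - x)) = (1 / sqrt (x - b)) * (1 / sqrt (c - x))" by simp
  show ?thesis
  proof (cases "x - b \<ge> (c - b) / 2")
    case True
    then show ?thesis unfolding e using key[OF True] G_ge[OF x] x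
      by (intro mult_mono) auto
  next
    case False
    then have h: "c - x \<ge> (c - b) / 2" by simp
    show ?thesis unfolding e using key[OF h] G_ge[OF x] x
      by (subst mult.commute, intro mult_mono) auto
  qed
qed

definition "K1 = K0 / (b - a) * (sqrt 2 / sqrt (c - b))"

lemma K1_pos: "K1 > 0" using abc K0_pos by (simp add: K1_def)

lemma B3: "x \<in> {b<..<c} \<Longrightarrow> 0 \<le> s \<Longrightarrow> 0 \<le> t \<Longrightarrow> \<bar>T1f a b c s t x\<bar> \<le> s * sqrt (c - b + t) * K1 * G x"
proof -
  assume x: "x \<in> {b<..<c}" and s: "0 \<le> s" and t: "0 \<le> t"
  define D where "D = sqrt (x - a + s) / sqrt (x - a) - 1"
  have D: "0 \<le> D" "D \<le> s / (x - a)" using gen_le[of "x - a" s] x abc s by (auto simp: D_def)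
  have "s / (x - a) \<le> s / (b - a)" using x abc s by (intro divide_left_mono) auto
  then have Dle: "D \<le> s / (b - a)" using D(2) by linarith
  have e: "T1f a b c s t x = D * sqrt (x - b + t) * (1 / (sqrt (1 - x) * sqrt (1 + x))) * (1 / (sqrt (x - b) * sqrt (c - x)))"
    using x abc unfolding T1f_def D_def by (simp add: field_simps)
  have n: "0 \<le> D * sqrt (x - b + t) * (1 / (sqrt (1 - x) * sqrt (1 + x))) * (1 / (sqrt (x - b) * sqrt (c - x)))"
    using D x abc t by auto
  have "D * sqrt (x - b + t) * (1 / (sqrt (1 - x) * sqrt (1 + x))) * (1 / (sqrt (x - b) * sqrt (c - x)))
     \<le> (s / (b - a)) * sqrt (c - b + t) * K0 * (sqrt 2 / sqrt (c - b) * G x)"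
    using D Dle x abc t s inv_prod_le[OF x] prod_inv_le[OF x] K0_pos
    by (intro mult_mono) auto
  also have "\<dots> = s * sqrt (c - b + t) * K1 * G x" by (simp add: K1_def)
  finally show ?thesis using e n by simp
qed

definition "qq = (1 - b) * (1 + b) * (c - b)"
definition "K2 = 6 * K0 / qq"

lemma qq_pos: "qq > 0" using abc by (simp add: qq_def)
lemma K2_pos: "K2 > 0" using qq_pos K0_pos by (simp add: K2_def)

lemma kf_sqrt: "x \<in> {b..<c} \<Longrightarrow> kf c x = 1 / sqrt ((1 - x) * (1 + x) * (c - x))"
  by (simp add: kf_def real_sqrt_mult)

lemma poly_bound: "x \<in> {b<..<c} \<Longrightarrow> \<bar>qq - (1 - x) * (1 + x) * (c - x)\<bar> \<le> 6 * (x - b)"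
proof -
  assume x: "x \<in> {b<..<c}"
  have e: "qq - (1 - x) * (1 + x) * (c - x) = (x - b) * (1 + c * (x + b) - (x^2 + x * b + b^2))"
    by (simp add: qq_def algebra_simps power2_eq_square)
  have ab: "\<bar>x\<bar> \<le> 1" "\<bar>b\<bar> \<le> 1" "\<bar>c\<bar> \<le> 1" using x abc by auto
  have "\<bar>c * (x + b)\<bar> \<le> 1 * 2" unfolding abs_mult using ab by (intro mult_mono) auto
  moreover have "\<bar>x * b\<bar> \<le> 1 * 1" unfolding abs_mult using ab by (intro mult_mono) auto
  moreover have "\<bar>x\<bar> * \<bar>x\<bar> \<le> 1 * 1" "\<bar>b\<bar> * \<bar>b\<bar> \<le> 1 * 1" using ab by (intro mult_mono; simp)+
  moreover have "x^2 = \<bar>x\<bar> * \<bar>x\<bar>" "b^2 = \<bar>b\<bar> * \<bar>b\<bar>" by (simp_all add: power2_eq_square abs_mult_self_eq)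
  ultimately have r: "-2 \<le> c*(x+b)" "c*(x+b) \<le> 2" "-1 \<le> x*b" "x*b \<le> 1" "0 \<le> x^2" "x^2 \<le> 1" "0 \<le> b^2" "b^2 \<le> 1"
    by (auto simp: abs_le_iff)
  have F: "\<bar>1 + c * (x + b) - (x^2 + x * b + b^2)\<bar> \<le> 6" unfolding abs_le_iff using r by linarith
  have "\<bar>qq - (1 - x) * (1 + x) * (c - x)\<bar> = (x - b) * \<bar>1 + c * (x + b) - (x^2 + x * b + b^2)\<bar>"
    unfolding e abs_mult using x by simp
  also have "\<dots> \<le> (x - b) * 6" using F x by (intro mult_left_mono) auto
  finally show ?thesis by simp
qed

lemma B4: "x \<in> {b<..<c} \<Longrightarrow> 0 \<le> t \<Longrightarrow> \<bar>(kf c x - kf c b) * phi b t x\<bar> \<le> t * K2 * G x"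
proof -
  assume x: "x \<in> {b<..<c}" and t: "0 \<le> t"
  define p where "p = (1 - x) * (1 + x) * (c - x)"
  have pp: "p > 0" using x abc by (simp add: p_def)
  have kb: "kf c b = 1 / sqrt qq" using kf_sqrt[of b] abc by (simp add: qq_def)
  have kx: "kf c x = 1 / sqrt p" using kf_sqrt[of x] x by (simp add: p_def)
  have sp: "1 / sqrt p \<le> K0 / sqrt (c - x)"
  proof -
    have "1 / sqrt p = 1 / (sqrt (1 - x) * sqrt (1 + x)) * (1 / sqrt (c - x))"
      by (simp add: p_def real_sqrt_mult)
    also have "\<dots> \<le> K0 * (1 / sqrt (c - x))" using inv_prod_le[OF x] x by (intro mult_right_mono) auto
    finally show ?thesis by simp
  qed
  have "\<bar>kf c x - kf c b\<bar> \<le> \<bar>qq - p\<bar> / (sqrt p * qq)" unfolding kx kb using gen2[OF pp qq_pos] .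
  also have "\<dots> = \<bar>qq - p\<bar> / qq * (1 / sqrt p)" by simp
  also have "\<dots> \<le> (6 * (x - b)) / qq * (K0 / sqrt (c - x))"
    using poly_bound[OF x] sp qq_pos pp unfolding p_def[symmetric]
    by (intro mult_mono divide_right_mono) auto
  finally have k: "\<bar>kf c x - kf c b\<bar> \<le> 6 * (x - b) / qq * (K0 / sqrt (c - x))" .
  have ph: "\<bar>phi b t x\<bar> \<le> t / (x - b)" using phi_le[OF x t] phi_nonneg[OF x t] by simp
  have "\<bar>(kf c x - kf c b) * phi b t x\<bar> \<le> (6 * (x - b) / qq * (K0 / sqrt (c - x))) * (t / (x - b))"
    unfolding abs_mult using k ph by (intro mult_mono) auto
  also have "\<dots> = t * K2 * (1 / sqrt (c - x))"
  proof -
    define u where "u = x - b"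
    have "u \<noteq> 0" using x by (simp add: u_def)
    then show ?thesis unfolding u_def[symmetric] by (simp add: K2_def)
  qed
  also have "\<dots> \<le> t * K2 * G x" using G_ge[OF x] t K2_pos by (intro mult_left_mono) auto
  finally show ?thesis .
qed


lemma IntG: "(G has_integral 4 * sqrt (c - b)) {b<..<c}"
  using int_G[of b c] abc by (simp add: G_def[abs_def])

lemma cont_kf: "continuous_on {b<..<c} (kf c)"
  unfolding kf_def using abc by (intro continuous_intros) auto

lemma cont_phi: "0 \<le> t \<Longrightarrow> continuous_on {b<..<c} (phi b t)"
  unfolding phi_def by (intro continuous_intros) auto

lemma cont_T1: "0 \<le> s \<Longrightarrow> 0 \<le> t \<Longrightarrow> continuous_on {b<..<c} (T1f a b c s t)"
  unfolding T1f_def using abc by (intro continuous_intros) auto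

lemma cont_R: "0 \<le> t \<Longrightarrow> continuous_on {b<..<c} (\<lambda>x. (kf c x - kf c b) * phi b t x)"
  using cont_kf cont_phi by (intro continuous_intros) auto

lemma int_kf: "kf c integrable_on {b<..<c}"
  using dom_int(1)[OF cont_kf IntG B1] .

lemma int_phi: "0 \<le> t \<Longrightarrow> phi b t integrable_on {b<..<c}"
  using dom_int(1)[OF cont_phi IntG B2] by blast

lemma int_T1: "0 \<le> s \<Longrightarrow> 0 \<le> t \<Longrightarrow> T1f a b c s t integrable_on {b<..<c}"
  "0 \<le> s \<Longrightarrow> 0 \<le> t \<Longrightarrow> \<bar>integral {b<..<c} (T1f a b c s t)\<bar> \<le> s * sqrt (c - b + t) * K1 * (4 * sqrt (c - b))"
  using dom_int[OF cont_T1 IntG B3] by blast+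

lemma int_R: "0 \<le> t \<Longrightarrow> (\<lambda>x. (kf c x - kf c b) * phi b t x) integrable_on {b<..<c}"
  "0 \<le> t \<Longrightarrow> \<bar>integral {b<..<c} (\<lambda>x. (kf c x - kf c b) * phi b t x)\<bar> \<le> t * K2 * (4 * sqrt (c - b))"
  using dom_int[OF cont_R IntG B4] by blast+

lemma Ff_decomp: "x \<in> {b<..<c} \<Longrightarrow> 0 \<le> s \<Longrightarrow> 0 \<le> t \<Longrightarrow>
  Ff a b c s t x = kf c x + T1f a b c s t x + kf c b * phi b t x + (kf c x - kf c b) * phi b t x"
proof -
  assume x: "x \<in> {b<..<c}"
  have gen: "\<And>A A' B B' P1 P2 C k0 :: real. A \<noteq> 0 \<Longrightarrow> B \<noteq> 0 \<Longrightarrow> P1 \<noteq> 0 \<Longrightarrow> P2 \<noteq> 0 \<Longrightarrow> C \<noteq> 0 \<Longrightarrow>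
     A' * B' / (P1 * P2 * A * B * C) = 1 / (P1 * P2 * C) + (A' - A) * B' / (B * P1 * P2 * A * C)
       + k0 * (B' / B - 1) + (1 / (P1 * P2 * C) - k0) * (B' / B - 1)"
    by (simp add: field_simps)
  show ?thesis unfolding Ff_def kf_def[of c x] T1f_def phi_def
    by (rule gen) (use x abc in auto)
qed

lemma Ff_00: "x \<in> {b<..<c} \<Longrightarrow> Ff a b c 0 0 x = kf c x"
  using abc by (simp add: Ff_def kf_def field_simps)


definition "EE t = sqrt (c - b) * sqrt (c - b + t) - (c - b) + t * ln (sqrt (c - b) + sqrt (c - b + t))"

lemma deriv_alg: fixes A B t :: real assumes "A > 0" "B > 0" "B^2 = A^2 + t"
  shows "inverse A / 2 * 1 * B + inverse B / 2 * 1 * A + t * (inverse (A + B) * (inverse A / 2 * 1 + inverse B / 2 * 1)) - 1 = B / A - 1"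
proof -
  have "A + B > 0" using assms by simp
  have 1: "inverse A / 2 * 1 + inverse B / 2 * 1 = (A + B) * (inverse (A * B) / 2)" using assms by (simp add: field_simps)
  have h1b: "inverse (A + B) * ((A + B) * (inverse (A * B) / 2)) = inverse (A * B) / 2" using \<open>A + B > 0\<close> by simp
  have 2: "inverse A / 2 * 1 * B + inverse B / 2 * 1 * A + t * (inverse (A * B) / 2) = (B * B + A * A + t) / (2 * A * B)"
    using assms by (simp add: field_simps)
  have 3: "B * B + A * A + t = 2 * (B * B)" using assms(3) by (simp add: power2_eq_square)
  have 4: "2 * (B * B) / (2 * A * B) = B / A" using assms by (simp add: field_simps)
  show ?thesis unfolding 1 h1b 2 3 4 by simp
qed

lemma phi_integral: "0 < t \<Longrightarrow> (phi b t has_integral EE t + t / 2 * ln (1 / t)) {b<..<c}"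
proof -
  assume t: "0 < t"
  define H where "H x = sqrt (x - b) * sqrt (x - b + t) + t * ln (sqrt (x - b) + sqrt (x - b + t)) - (x - b)" for x
  have "(phi b t has_integral (H c - H b)) {b..c}"
  proof (rule fundamental_theorem_of_calculus_interior)
    show "b \<le> c" using abc by simp
    have pos: "\<forall>x\<in>{b..c}. sqrt (x - b) + sqrt (x - b + t) \<noteq> 0"
    proof
      fix x assume "x \<in> {b..c}"
      then have "0 \<le> sqrt (x - b)" "0 < sqrt (x - b + t)" using t by auto
      then show "sqrt (x - b) + sqrt (x - b + t) \<noteq> 0" by linarith
    qed
    show "continuous_on {b..c} H" unfolding H_def using pos by (intro continuous_intros) auto
    show "(H has_vector_derivative phi b t x) (at x)" if x: "x \<in> {b<..<c}" for x
    proof -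
      have l: "DERIV (\<lambda>x. x - b) x :> 1" by (auto intro!: derivative_eq_intros)
      have l2: "DERIV (\<lambda>x. x - b + t) x :> 1" by (auto intro!: derivative_eq_intros)
      have d1: "DERIV (\<lambda>x. sqrt (x - b)) x :> inverse (sqrt (x - b)) / 2 * 1"
        using DERIV_chain2[OF DERIV_real_sqrt[of "x - b"] l] x by simp
      have d2: "DERIV (\<lambda>x. sqrt (x - b + t)) x :> inverse (sqrt (x - b + t)) / 2 * 1"
        using DERIV_chain2[OF DERIV_real_sqrt[of "x - b + t"] l2] x t by simp
      note dsum = DERIV_add[OF d1 d2]
      have pos: "0 < sqrt (x - b) + sqrt (x - b + t)" using x t by (simp add: add_pos_pos)
      note dln = DERIV_chain2[OF DERIV_ln[OF pos] dsum]
      note dH = DERIV_diff[OF DERIV_add[OF DERIV_mult[OF d1 d2] DERIV_cmult[OF dln, of t]] l]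
      have "(H has_real_derivative phi b t x) (at x)"
        unfolding H_def
      proof (rule DERIV_cong[OF dH])
        show "inverse (sqrt (x - b)) / 2 * 1 * sqrt (x - b + t) + inverse (sqrt (x - b + t)) / 2 * 1 * sqrt (x - b) +
          t * (inverse (sqrt (x - b) + sqrt (x - b + t)) * (inverse (sqrt (x - b)) / 2 * 1 + inverse (sqrt (x - b + t)) / 2 * 1)) - 1 = phi b t x"
          unfolding phi_def by (rule deriv_alg) (use x t in auto)
      qed
      then show ?thesis by (simp add: has_real_derivative_iff_has_vector_derivative)
    qed
  qed
  moreover have "H c - H b = EE t + t / 2 * ln (1 / t)"
    using t by (simp add: H_def EE_def ln_sqrt ln_div)
  ultimately show ?thesis by (simp add: has_integral_Icc_iff_Ioo)
qed

lemma gst_real: "x \<in> {b<..<c} \<Longrightarrow> 0 \<le> s \<Longrightarrow> 0 \<le> t \<Longrightarrow>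
   gst a b c s t x = - complex_of_real (Ff a b c s t x)"
proof -
  assume x: "x \<in> {b<..<c}" and s: "0 \<le> s" and t: "0 \<le> t"
  have p: "psqrt y = complex_of_real (sqrt y)" if "0 \<le> y" for y using that by (simp add: psqrt_def csqrt_of_real)
  have n: "psqrt y = \<i> * complex_of_real (sqrt (- y))" if "y < 0" for y
    using that by (simp add: psqrt_def csqrt_of_real')
  have "gst a b c s t x = complex_of_real (sqrt (x - a + s)) * complex_of_real (sqrt (x - b + t)) /
     ((\<i> * complex_of_real (sqrt (1 - x))) * complex_of_real (sqrt (1 + x)) * complex_of_real (sqrt (x - a))
      * complex_of_real (sqrt (x - b)) * (\<i> * complex_of_real (sqrt (c - x))))"
    unfolding gst_def using x abc s t by (simp add: p n add.commute)
  also have "\<dots> = - complex_of_real (Ff a b c s t x)"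
    unfolding Ff_def by (simp add: field_simps)
  finally show ?thesis .
qed


lemma Ff_has: assumes "0 \<le> s" "0 \<le> t"
  shows "(Ff a b c s t has_integral (integral {b<..<c} (kf c) + integral {b<..<c} (T1f a b c s t)
     + kf c b * integral {b<..<c} (phi b t) + integral {b<..<c} (\<lambda>x. (kf c x - kf c b) * phi b t x))) {b<..<c}"
proof -
  have "((\<lambda>x. kf c x + T1f a b c s t x + kf c b * phi b t x + (kf c x - kf c b) * phi b t x) has_integral
     (integral {b<..<c} (kf c) + integral {b<..<c} (T1f a b c s t)
     + kf c b * integral {b<..<c} (phi b t) + integral {b<..<c} (\<lambda>x. (kf c x - kf c b) * phi b t x))) {b<..<c}"
    by (intro has_integral_add has_integral_mult_right integrable_integral int_kf int_T1 int_phi int_R assms)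
  then show ?thesis
    by (subst has_integral_cong[OF Ff_decomp]) (use assms in auto)
qed

lemma Pst_eq: assumes "0 \<le> s" "0 \<le> t"
  shows "Pst a b c s t = complex_of_real (integral {b<..<c} (Ff a b c s t))"
proof -
  have hi: "(Ff a b c s t has_integral integral {b<..<c} (Ff a b c s t)) {b<..<c}"
    using Ff_has[OF assms] by (blast intro: integrable_integral has_integral_integrable)
  have "integral {b..c} (gst a b c s t) = integral {b<..<c} (gst a b c s t)"
    by (rule integral_open_interval_real)
  also have "\<dots> = integral {b<..<c} (\<lambda>x. - complex_of_real (Ff a b c s t x))"
    by (rule integral_cong) (use gst_real assms in auto)
  also have "\<dots> = - complex_of_real (integral {b<..<c} (Ff a b c s t))"
    using has_integral_neg[OF has_integral_of_real[OF hi]] by (rule integral_unique)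
  finally show ?thesis by (simp add: Pst_def)
qed

lemma Pst_00: "Pst a b c 0 0 = complex_of_real (integral {b<..<c} (kf c))"
proof -
  have "integral {b<..<c} (Ff a b c 0 0) = integral {b<..<c} (kf c)"
    by (rule integral_cong) (use Ff_00 in auto)
  then show ?thesis using Pst_eq[of 0 0] by simp
qed

definition "Lam = \<bar>ln (sqrt (c - b))\<bar> + \<bar>ln (sqrt (c - b) + sqrt (c - b + 1))\<bar>"

lemma EE_bound: assumes "0 < t" "t < 1" shows "\<bar>EE t\<bar> \<le> (1 + Lam) * t"
proof -
  define L where "L = c - b"
  have L: "L > 0" using abc by (simp add: L_def)
  have e: "sqrt L * sqrt (L + t) = sqrt (L * (L + t))" by (simp add: real_sqrt_mult)
  have u1: "L \<le> sqrt (L * (L + t))" using L assms by (intro real_le_rsqrt) (simp add: power2_eq_square)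
  have u2: "sqrt (L * (L + t)) \<le> L + t" using L assms by (intro real_le_lsqrt) (auto simp: power2_eq_square algebra_simps)
  have p1: "\<bar>sqrt L * sqrt (L + t) - L\<bar> \<le> t" using u1 u2 e by simp
  define y where "y = sqrt L + sqrt (L + t)"
  have y1: "sqrt L \<le> y" "0 < sqrt L" using assms L by (auto simp: y_def)
  have y2: "y \<le> sqrt L + sqrt (L + 1)" using assms by (simp add: y_def)
  have "0 < y" using y1 by linarith
  then have l1: "ln (sqrt L) \<le> ln y" using y1 ln_le_cancel_iff[of "sqrt L" y] by blast
  have "0 < sqrt L + sqrt (L + 1)" using y1 by (simp add: add_pos_nonneg)
  then have l2: "ln y \<le> ln (sqrt L + sqrt (L + 1))" using y2 \<open>0 < y\<close> ln_le_cancel_iff[of y "sqrt L + sqrt (L + 1)"] by blast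
  have ly: "\<bar>ln y\<bar> \<le> Lam" using l1 l2 unfolding Lam_def L_def[symmetric] by linarith
  have p2: "\<bar>t * ln y\<bar> \<le> Lam * t" using ly assms by (simp add: abs_mult mult.commute mult_right_mono)
  have "\<bar>EE t\<bar> \<le> \<bar>sqrt L * sqrt (L + t) - L\<bar> + \<bar>t * ln y\<bar>"
    unfolding EE_def L_def[symmetric] y_def by linarith
  then show ?thesis using p1 p2 by (simp add: algebra_simps)
qed

lemma ev_small: assumes "\<delta> > 0"
  shows "eventually (\<lambda>p. 0 < fst p \<and> 0 < snd p \<and> snd p < \<delta>) (at (0::real, 0::real) within ({0<..} \<times> {0<..}))"
proof -
  have "\<forall>p\<in>{0<..} \<times> {0<..}. p \<noteq> (0::real, 0::real) \<and> dist p (0, 0) < \<delta> \<longrightarrow> 0 < fst p \<and> 0 < snd p \<and> snd p < \<delta>"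
  proof (intro ballI impI)
    fix p :: "real \<times> real" assume p: "p \<in> {0<..} \<times> {0<..}" "p \<noteq> (0, 0) \<and> dist p (0, 0) < \<delta>"
    have "dist (snd p) (snd (0::real, 0::real)) \<le> dist p (0, 0)" by (rule dist_snd_le)
    then show "0 < fst p \<and> 0 < snd p \<and> snd p < \<delta>" using p by (auto simp: dist_real_def)
  qed
  then show ?thesis unfolding eventually_at using assms by blast
qed


lemma main:
  shows "\<exists>R1 R2 :: real \<times> real \<Rightarrow> complex.
    (\<forall>s t. 0 < s \<longrightarrow> 0 < t \<longrightarrow>
       Pst a b c s t - Pst a b c 0 0 =
         complex_of_real (1 / (2 * sqrt (1 - b) * sqrt (1 + b) * sqrt (c - b)) * (t * ln (1 / t)))
         + R1 (s, t) + R2 (s, t))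
    \<and> R1 \<in> o[at (0, 0) within ({0<..} \<times> {0<..})](\<lambda>(s, t). complex_of_real (t * ln (1 / t)))
    \<and> R2 \<in> O[at (0, 0) within ({0<..} \<times> {0<..})](\<lambda>(s, t). complex_of_real s)"
proof -
  define IT where "IT s t = integral {b<..<c} (T1f a b c s t)" for s t
  define IR where "IR t = integral {b<..<c} (\<lambda>x. (kf c x - kf c b) * phi b t x)" for t
  define R1 where "R1 = (\<lambda>p :: real \<times> real. complex_of_real (kf c b * EE (snd p) + IR (snd p)))"
  define R2 where "R2 = (\<lambda>p :: real \<times> real. complex_of_real (IT (fst p) (snd p)))"
  define k0 where "k0 = kf c b"
  have k0: "k0 > 0" using abc by (simp add: k0_def kf_def)
  have eq: "Pst a b c s t - Pst a b c 0 0 =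
         complex_of_real (1 / (2 * sqrt (1 - b) * sqrt (1 + b) * sqrt (c - b)) * (t * ln (1 / t)))
         + R1 (s, t) + R2 (s, t)" if st: "0 < s" "0 < t" for s t
  proof -
    have "integral {b<..<c} (Ff a b c s t) = integral {b<..<c} (kf c) + IT s t + k0 * (EE t + t / 2 * ln (1 / t)) + IR t"
      using integral_unique[OF Ff_has[of s t]] integral_unique[OF phi_integral[OF st(2)]] st
      by (simp add: IT_def IR_def k0_def)
    then have "Pst a b c s t - Pst a b c 0 0 = complex_of_real (k0 * (t / 2 * ln (1 / t)) + (k0 * EE t + IR t) + IT s t)"
      using Pst_eq[of s t] Pst_00 st by (simp add: algebra_simps)
    moreover have "k0 * (t / 2 * ln (1 / t)) = 1 / (2 * sqrt (1 - b) * sqrt (1 + b) * sqrt (c - b)) * (t * ln (1 / t))"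
      by (simp add: k0_def kf_def)
    ultimately have "Pst a b c s t - Pst a b c 0 0 = complex_of_real (1 / (2 * sqrt (1 - b) * sqrt (1 + b) * sqrt (c - b)) * (t * ln (1 / t)))
       + complex_of_real (k0 * EE t + IR t) + complex_of_real (IT s t)" by (simp only: of_real_add)
    then show ?thesis by (simp only: R1_def R2_def k0_def fst_conv snd_conv)
  qed
  define C2 where "C2 = sqrt (c - b + 1) * K1 * (4 * sqrt (c - b))"
  have R2O: "R2 \<in> O[at (0, 0) within ({0<..} \<times> {0<..})](\<lambda>(s, t). complex_of_real s)"
  proof (rule bigoI[where c = C2])
    show "\<forall>\<^sub>F p in at (0, 0) within {0<..} \<times> {0<..}. norm (R2 p) \<le> C2 * norm (case p of (s, t) \<Rightarrow> complex_of_real s)"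
      using ev_small[OF zero_less_one]
    proof (rule eventually_mono)
      fix p :: "real \<times> real" assume p: "0 < fst p \<and> 0 < snd p \<and> snd p < 1"
      obtain s t where pst: "p = (s, t)" by fastforce
      have st: "0 < s" "0 < t" "t < 1" using p pst by auto
      have "\<bar>IT s t\<bar> \<le> s * sqrt (c - b + t) * K1 * (4 * sqrt (c - b))"
        using int_T1(2)[of s t] st by (simp add: IT_def)
      also have "\<dots> \<le> s * sqrt (c - b + 1) * K1 * (4 * sqrt (c - b))"
        using st K1_pos abc by (intro mult_right_mono mult_left_mono) auto
      finally show "norm (R2 p) \<le> C2 * norm (case p of (s, t) \<Rightarrow> complex_of_real s)"
        using st by (simp add: pst R2_def C2_def algebra_simps)
    qed
  qed
  define C1 where "C1 = k0 * (1 + Lam) + K2 * (4 * sqrt (c - b))"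
  have C1: "C1 \<ge> 0" using k0 K2_pos abc by (simp add: C1_def Lam_def)
  have R1b: "norm (R1 (s, t)) \<le> C1 * t" if st: "0 < t" "t < 1" for s t
  proof -
    have "\<bar>k0 * EE t + IR t\<bar> \<le> k0 * \<bar>EE t\<bar> + \<bar>IR t\<bar>"
      using k0 abs_triangle_ineq[of "k0 * EE t" "IR t"] by (simp add: abs_mult)
    also have "\<dots> \<le> k0 * ((1 + Lam) * t) + t * K2 * (4 * sqrt (c - b))"
      using EE_bound[OF st] int_R(2)[of t] st k0 by (intro add_mono mult_left_mono) (auto simp: IR_def)
    finally have "\<bar>k0 * EE t + IR t\<bar> \<le> C1 * t" by (simp add: C1_def algebra_simps)
    moreover have "norm (R1 (s, t)) = \<bar>k0 * EE t + IR t\<bar>" unfolding R1_def k0_def by (simp only: norm_of_real snd_conv)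
    ultimately show ?thesis by simp
  qed
  have R1o: "R1 \<in> o[at (0, 0) within ({0<..} \<times> {0<..})](\<lambda>(s, t). complex_of_real (t * ln (1 / t)))"
  proof (rule landau_o.smallI)
    fix e :: real assume e: "e > 0"
    define \<delta> where "\<delta> = min 1 (exp (- C1 / e))"
    have "\<delta> > 0" by (simp add: \<delta>_def)
    show "\<forall>\<^sub>F p in at (0, 0) within {0<..} \<times> {0<..}. norm (R1 p) \<le> e * norm (case p of (s, t) \<Rightarrow> complex_of_real (t * ln (1 / t)))"
      using ev_small[OF \<open>\<delta> > 0\<close>]
    proof (rule eventually_mono)
      fix p :: "real \<times> real" assume p: "0 < fst p \<and> 0 < snd p \<and> snd p < \<delta>"
      obtain s t where pst: "p = (s, t)" by fastforce
      have st: "0 < t" "t < 1" "t < exp (- C1 / e)" using p pst by (auto simp: \<delta>_def)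
      have "ln t < - C1 / e" using st by (metis ln_less_cancel_iff exp_gt_zero ln_exp)
      then have lt: "C1 / e < ln (1 / t)" using st by (simp add: ln_div)
      then have "C1 \<le> e * ln (1 / t)" using e by (simp add: field_simps)
      then have "C1 * t \<le> e * (t * ln (1 / t))" using st by (simp add: mult_right_mono algebra_simps)
      moreover have "0 \<le> t * ln (1 / t)" using st lt C1 e
        by (meson less_eq_real_def mult_nonneg_nonneg divide_nonneg_pos order_trans)
      ultimately show "norm (R1 p) \<le> e * norm (case p of (s, t) \<Rightarrow> complex_of_real (t * ln (1 / t)))"
      proof -
        have "norm (case p of (s, t) \<Rightarrow> complex_of_real (t * ln (1 / t))) = \<bar>t * ln (1 / t)\<bar>"
          unfolding pst by (simp only: norm_of_real case_prod_conv)
        then show ?thesis using R1b[OF st(1,2), of s] \<open>C1 * t \<le> e * (t * ln (1 / t))\<close> \<open>0 \<le> t * ln (1 / t)\<close>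
          by (simp add: pst)
      qed
    qed
  qed
  show ?thesis using eq R1o R2O by blast
qed

end
theorem proposition4p4:
  fixes \<xi>1 \<xi>2 \<xi>3 :: real
  assumes "-1 < \<xi>1" "\<xi>1 < \<xi>2" "\<xi>2 < \<xi>3" "\<xi>3 < 1"
  shows "\<exists>R1 R2 :: real \<times> real \<Rightarrow> complex.
    (\<forall>s t. 0 < s \<longrightarrow> 0 < t \<longrightarrow>
       Pst \<xi>1 \<xi>2 \<xi>3 s t - Pst \<xi>1 \<xi>2 \<xi>3 0 0 =
         complex_of_real (1 / (2 * sqrt (1 - \<xi>2) * sqrt (1 + \<xi>2) * sqrt (\<xi>3 - \<xi>2)) * (t * ln (1 / t)))
         + R1 (s, t) + R2 (s, t))
    \<and> R1 \<in> o[at (0, 0) within ({0<..} \<times> {0<..})](\<lambda>(s, t). complex_of_real (t * ln (1 / t)))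
    \<and> R2 \<in> O[at (0, 0) within ({0<..} \<times> {0<..})](\<lambda>(s, t). complex_of_real s)"
  using main[OF assms] .

end
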